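(* For any tree $T$, $\gamma_{oidR}(T)\ge 2\beta(T)+1$, and this bound is tight (there are trees attaining equality).
   Context: $\beta(T)$ is the vertex cover number of $T$. A DRD function of $G$ is $f:V(G)\to\{0,1,2,3\}$ such that every vertex with value $0$ has a neighbor with value $3$ or two neighbors with value $2$, and every vertex with value $1$ has a neighbor with value at least $2$; it is an OIDRD function if the set of vertices with value $0$ is independent, and $\gamma_{oidR}(G)$ is the minimum weight $\sum_v f(v)$ of an OIDRD function. *)

theory Defs
  imports Main
begin

definition is_graph :: "'a set \<Rightarrow> ('a \<Rightarrow> 'a \<Rightarrow> bool) \<Rightarrow> bool" where
  "is_graph V E \<longleftrightarrow> finite V \<and>
     (\<forall>u v. E u v \<longrightarrow> u \<in> V \<and> v \<in> V \<and> u \<noteq> v \<and> E v u)"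

definition connected_graph :: "'a set \<Rightarrow> ('a \<Rightarrow> 'a \<Rightarrow> bool) \<Rightarrow> bool" where
  "connected_graph V E \<longleftrightarrow> (\<forall>u\<in>V. \<forall>v\<in>V. E\<^sup>*\<^sup>* u v)"

definition has_cycle :: "'a set \<Rightarrow> ('a \<Rightarrow> 'a \<Rightarrow> bool) \<Rightarrow> bool" where
  "has_cycle V E \<longleftrightarrow> (\<exists>cs. length cs \<ge> 3 \<and> distinct cs \<and> set cs \<subseteq> V \<and>
     (\<forall>i. Suc i < length cs \<longrightarrow> E (cs ! i) (cs ! Suc i)) \<and> E (last cs) (hd cs))"

definition is_tree :: "'a set \<Rightarrow> ('a \<Rightarrow> 'a \<Rightarrow> bool) \<Rightarrow> bool" where
  "is_tree V E \<longleftrightarrow> is_graph V E \<and> V \<noteq> {} \<and> connected_graph V E \<and> \<not> has_cycle V E"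

definition vertex_cover :: "'a set \<Rightarrow> ('a \<Rightarrow> 'a \<Rightarrow> bool) \<Rightarrow> 'a set \<Rightarrow> bool" where
  "vertex_cover V E S \<longleftrightarrow> S \<subseteq> V \<and> (\<forall>u v. E u v \<longrightarrow> u \<in> S \<or> v \<in> S)"

definition beta :: "'a set \<Rightarrow> ('a \<Rightarrow> 'a \<Rightarrow> bool) \<Rightarrow> nat" where
  "beta V E = (LEAST k. \<exists>S. vertex_cover V E S \<and> card S = k)"

definition DRD :: "'a set \<Rightarrow> ('a \<Rightarrow> 'a \<Rightarrow> bool) \<Rightarrow> ('a \<Rightarrow> nat) \<Rightarrow> bool" where
  "DRD V E f \<longleftrightarrow> (\<forall>v\<in>V. f v \<le> 3) \<and>
     (\<forall>v\<in>V. f v = 0 \<longrightarrow> (\<exists>u. E v u \<and> f u = 3) \<or>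
                         (\<exists>u w. u \<noteq> w \<and> E v u \<and> E v w \<and> f u = 2 \<and> f w = 2)) \<and>
     (\<forall>v\<in>V. f v = 1 \<longrightarrow> (\<exists>u. E v u \<and> f u \<ge> 2))"

definition OIDRD :: "'a set \<Rightarrow> ('a \<Rightarrow> 'a \<Rightarrow> bool) \<Rightarrow> ('a \<Rightarrow> nat) \<Rightarrow> bool" where
  "OIDRD V E f \<longleftrightarrow> DRD V E f \<and>
     (\<forall>u\<in>V. \<forall>v\<in>V. f u = 0 \<and> f v = 0 \<longrightarrow> \<not> E u v)"

definition gamma_oidR :: "'a set \<Rightarrow> ('a \<Rightarrow> 'a \<Rightarrow> bool) \<Rightarrow> nat" where
  "gamma_oidR V E = (LEAST w. \<exists>f. OIDRD V E f \<and> (\<Sum>v\<in>V. f v) = w)"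

end

theory Submission
  imports Defs
begin


definition is_path :: "'a set \<Rightarrow> ('a \<Rightarrow> 'a \<Rightarrow> bool) \<Rightarrow> 'a list \<Rightarrow> bool" where
"is_path V E xs \<longleftrightarrow> xs \<noteq> [] \<and> distinct xs \<and> set xs \<subseteq> V \<and> (\<forall>i. Suc i < length xs \<longrightarrow> E (xs!i) (xs!Suc i))"

lemma max_path_exists:
  assumes "finite V" "V \<noteq> {}"
  shows "\<exists>P. is_path V E P \<and> (\<forall>Q. is_path V E Q \<longrightarrow> length Q \<le> length P)"
proof -
  obtain x where x: "x \<in> V" using assms by auto
  have p1: "is_path V E [x]" using x by (simp add: is_path_def)
  have bnd: "\<forall>y. (\<exists>Q. is_path V E Q \<and> length Q = y) \<longrightarrow> y \<le> card V"
    by (metis assms(1) card_mono distinct_card is_path_def)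
  obtain k where "\<exists>Q. is_path V E Q \<and> length Q = k"
      "\<forall>y. (\<exists>Q. is_path V E Q \<and> length Q = y) \<longrightarrow> y \<le> k"
    using Nat.ex_has_greatest_nat[of "\<lambda>k. \<exists>Q. is_path V E Q \<and> length Q = k", OF _ bnd] p1 by blast
  then show ?thesis by blast
qed

lemma take_cycle:
  assumes g: "is_graph V E" and P: "is_path V E P" and i: "2 \<le> i" "i < length P" and e: "E (P!0) (P!i)"
  shows "has_cycle V E"
  unfolding has_cycle_def
proof (intro exI conjI)
  let ?cs = "take (Suc i) P"
  show "3 \<le> length ?cs" using i by simp
  show "distinct ?cs" using P by (simp add: is_path_def)
  show "set ?cs \<subseteq> V" using P by (meson is_path_def order_trans set_take_subset)
  show "\<forall>j. Suc j < length ?cs \<longrightarrow> E (?cs ! j) (?cs ! Suc j)" using P i by (simp add: is_path_def)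
  have "last ?cs = P!i" using i by (subst last_conv_nth) (auto simp: min_def intro: arg_cong[where f="(!) P"])
  moreover have "hd ?cs = P!0" using i by (metis hd_conv_nth hd_take less_zeroE list.size(3) zero_less_Suc)
  ultimately show "E (last ?cs) (hd ?cs)" using e g by (simp add: is_graph_def)
qed

lemma maxpath_end:
  assumes g: "is_graph V E" and nc: "\<not> has_cycle V E" and P: "is_path V E P"
    and mx: "\<forall>Q. is_path V E Q \<longrightarrow> length Q \<le> length P" and l: "2 \<le> length P"
    and e: "E (P!0) y"
  shows "y = P!1"
proof (rule ccontr)
  assume ne: "y \<noteq> P!1"
  show False
  proof (cases "y \<in> set P")
    case True
    then obtain i where i: "i < length P" "y = P!i" by (metis in_set_conv_nth)
    have "i \<noteq> 0" using e g i by (metis is_graph_def)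
    moreover have "i \<noteq> 1" using ne i by auto
    ultimately have "2 \<le> i" by arith
    then show False using take_cycle[OF g P _ i(1)] e i nc by auto
  next
    case False
    have "is_path V E (y # P)"
      using P False e g unfolding is_path_def is_graph_def
      by (auto simp: nth_Cons split: nat.splits)
    then show False using mx by fastforce
  qed
qed

lemma path_drop1:
  assumes "is_path V E P" "2 \<le> length P"
  shows "is_path V E (drop 1 P)"
proof -
  have "set (drop 1 P) \<subseteq> set P" by (rule set_drop_subset)
  moreover have "distinct (drop 1 P)" using assms(1) by (simp add: is_path_def)
  moreover have "drop 1 P \<noteq> []" using assms(2) by simp
  moreover have "\<forall>i. Suc i < length (drop 1 P) \<longrightarrow> E (drop 1 P ! i) (drop 1 P ! Suc i)"
    using assms(1) by (simp add: is_path_def)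
  ultimately show ?thesis using assms(1) unfolding is_path_def by blast
qed

lemma star_exists:
  assumes g: "is_graph V E" and nc: "\<not> has_cycle V E" and ne: "V \<noteq> {}"
  shows "\<exists>u\<in>V. (\<forall>x. \<not> E u x) \<or> ((\<exists>l. E u l \<and> (\<forall>y. E l y \<longrightarrow> y = u)) \<and>
            (\<exists>p. \<forall>x. E u x \<longrightarrow> x = p \<or> (\<forall>y. E x y \<longrightarrow> y = u)))"
proof -
  have fin: "finite V" using g by (simp add: is_graph_def)
  obtain P where P: "is_path V E P" and mx: "\<forall>Q. is_path V E Q \<longrightarrow> length Q \<le> length P"
    using max_path_exists[OF fin ne] by blast
  have Pne: "P \<noteq> []" using P by (simp add: is_path_def)
  show ?thesis
  proof (cases "length P = 1")
    case True
    let ?u = "P!0"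
    have uV: "?u \<in> V" using P Pne by (auto simp: is_path_def)
    have "\<forall>x. \<not> E ?u x"
    proof (intro allI notI)
      fix x assume e: "E ?u x"
      have "is_path V E [x, ?u]" using e g unfolding is_path_def is_graph_def
        by (auto simp: nth_Cons split: nat.splits)
      then have "length [x, ?u] \<le> length P" using mx by blast
      then show False using True by simp
    qed
    then show ?thesis using uV by blast
  next
    case False
    moreover have "length P \<noteq> 0" using Pne by simp
    ultimately have l2: "2 \<le> length P" by arith
    let ?u = "P!1"
    have uV: "?u \<in> V" using P l2 by (auto simp: is_path_def)
    have e01: "E (P!0) (P!1)" using P l2 by (auto simp: is_path_def)
    have leaf0: "\<forall>y. E (P!0) y \<longrightarrow> y = ?u" using maxpath_end[OF g nc P mx l2] by blast
    have A: "E ?u (P!0) \<and> (\<forall>y. E (P!0) y \<longrightarrow> y = ?u)" using e01 g leaf0 by (metis is_graph_def)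
    have B: "\<forall>x. E ?u x \<longrightarrow> x = P!2 \<or> (\<forall>y. E x y \<longrightarrow> y = ?u)"
    proof (intro allI impI)
      fix x assume e: "E ?u x"
      show "x = P!2 \<or> (\<forall>y. E x y \<longrightarrow> y = ?u)"
      proof (cases "x \<in> set P")
        case True
        then obtain i where i: "i < length P" "x = P!i" by (metis in_set_conv_nth)
        consider "i = 0" | "i = 1" | "i = 2" | "3 \<le> i" by arith
        then show ?thesis
        proof cases
          case 1 then show ?thesis using leaf0 i by simp
        next
          case 2 then show ?thesis using e g i by (metis is_graph_def)
        next
          case 3 then show ?thesis using i by simp
        next
          case 4
          have "has_cycle V E"
            using take_cycle[OF g path_drop1[OF P l2], of "i - 1"] 4 i e by (simp add: nth_drop)
          then show ?thesis using nc by simp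
        qed
      next
        case False
        let ?Q = "x # drop 1 P"
        have sd: "set (drop 1 P) \<subseteq> set P" by (rule set_drop_subset)
        have xV: "x \<in> V" "E x (P!1)" using e g by (metis is_graph_def)+
        have dp: "is_path V E (drop 1 P)" by (rule path_drop1[OF P l2])
        have Q: "is_path V E ?Q"
          unfolding is_path_def
        proof (intro conjI allI impI)
          show "distinct ?Q" using dp False sd unfolding is_path_def by auto
          show "set ?Q \<subseteq> V" using dp xV unfolding is_path_def by auto
          fix j assume j: "Suc j < length ?Q"
          show "E (?Q ! j) (?Q ! Suc j)"
          proof (cases j)
            case 0 then show ?thesis using xV l2 by (simp add: nth_drop)
          next
            case (Suc k) then show ?thesis using dp j unfolding is_path_def by simp
          qed
        qed simp
        have lQ: "length ?Q = length P" using l2 by simp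
        have "\<forall>y. E (?Q!0) y \<longrightarrow> y = ?Q!1"
          using maxpath_end[OF g nc Q] mx lQ l2 by auto
        then show ?thesis using l2 by (simp add: nth_drop)
      qed
    qed
    show ?thesis using uV A B by blast
  qed
qed



definition sat :: "('a \<Rightarrow> 'a \<Rightarrow> bool) \<Rightarrow> ('a \<Rightarrow> nat) \<Rightarrow> 'a \<Rightarrow> bool" where
 "sat E f v \<longleftrightarrow> (f v = 0 \<longrightarrow> (\<exists>u. E v u \<and> f u = 3) \<or> (\<exists>u w. u \<noteq> w \<and> E v u \<and> E v w \<and> f u = 2 \<and> f w = 2))
    \<and> (f v = 1 \<longrightarrow> (\<exists>u. E v u \<and> f u \<ge> 2))"

lemma sat_mono: "sat E f v \<Longrightarrow> (\<forall>x. E v x \<and> f x \<ge> 2 \<longrightarrow> E' v x) \<Longrightarrow> sat E' f v"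
  unfolding sat_def by (metis eval_nat_numeral(3) le_refl less_Suc_eq_le nat_less_le)

lemma has_cycle_mono: "has_cycle V' E' \<Longrightarrow> V' \<subseteq> V \<Longrightarrow> (\<forall>a b. E' a b \<longrightarrow> E a b) \<Longrightarrow> has_cycle V E"
  unfolding has_cycle_def by (meson order_trans)

lemma sum_g: "finite A \<Longrightarrow> (\<Sum>x\<in>A. f x + (if x \<in> D then 1 else 0)) = sum f A + card (D \<inter> A)"
proof (induction A rule: finite_induct)
  case (insert x F)
  then show ?case by (cases "x \<in> D") (auto simp: Int_insert_right)
qed simp


lemma leaf_sat: "sat E f x \<Longrightarrow> \<forall>y. E x y \<longrightarrow> y = u \<Longrightarrow> (f x = 0 \<longrightarrow> f u = 3) \<and> (f x = 1 \<longrightarrow> f u \<ge> 2)"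
  unfolding sat_def by auto

lemma main:
  fixes f :: "'a \<Rightarrow> nat"
  assumes "is_graph V E" "\<not> has_cycle V E" "V \<noteq> {}"
    "\<forall>a\<in>V. \<forall>b\<in>V. f a = 0 \<and> f b = 0 \<longrightarrow> \<not> E a b"
    "\<forall>v\<in>V - D. sat E f v" "D \<subseteq> V"
  shows "\<exists>S. vertex_cover V E S \<and> 2 * card S + 1 \<le> sum f V + card D"
  using assms
proof (induction "card V" arbitrary: V E D rule: less_induct)
  case less
  note g = less.prems(1) and nc = less.prems(2) and ne = less.prems(3)
    and ind = less.prems(4) and st = less.prems(5) and DV = less.prems(6)
  have fin: "finite V" using g by (simp add: is_graph_def)
  have Ev1: "\<And>a b. E a b \<Longrightarrow> a \<in> V" using g by (simp add: is_graph_def)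
  have Ev2: "\<And>a b. E a b \<Longrightarrow> b \<in> V" using g by (simp add: is_graph_def)
  have Eirr: "\<And>a b. E a b \<Longrightarrow> a \<noteq> b" using g by (simp add: is_graph_def)
  have Esym: "\<And>a b. E a b \<Longrightarrow> E b a" using g by (simp add: is_graph_def)
  obtain u where uV: "u \<in> V" and ucases: "(\<forall>x. \<not> E u x) \<or> ((\<exists>l. E u l \<and> (\<forall>y. E l y \<longrightarrow> y = u)) \<and>
            (\<exists>p. \<forall>x. E u x \<longrightarrow> x = p \<or> (\<forall>y. E x y \<longrightarrow> y = u)))"
    using star_exists[OF g nc ne] by blast
  show ?case
  proof (cases "\<forall>x. \<not> E u x")
    case iso: True
    show ?thesis
    proof (cases "V - {u} = {}")
      case True
      then have Vu: "V = {u}" using uV by blast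
      have vc: "vertex_cover V E {}" unfolding vertex_cover_def using Vu Ev1 iso by blast
      have "1 \<le> f u + card D"
      proof (cases "u \<in> D")
        case True
        then have "D \<noteq> {}" by blast
        then have "card D \<ge> 1" using DV fin by (meson card_0_eq finite_subset less_one not_le)
        then show ?thesis by simp
      next
        case False
        then have "sat E f u" using st uV by blast
        then have "f u \<noteq> 0" using iso by (simp add: sat_def)
        then show ?thesis by simp
      qed
      then show ?thesis using vc Vu by auto
    next
      case False
      define V' where "V' = V - {u}"
      define E' where "E' = (\<lambda>a b. E a b \<and> a \<in> V' \<and> b \<in> V')"
      define D' where "D' = D - {u}"
      have "card V' < card V" unfolding V'_def using fin uV by (meson card_Diff1_less)
      moreover have "is_graph V' E'" unfolding is_graph_def
      proof (rule conjI)
        show "finite V'" using fin unfolding V'_def by simp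
        show "\<forall>a b. E' a b \<longrightarrow> a \<in> V' \<and> b \<in> V' \<and> a \<noteq> b \<and> E' b a"
        proof (intro allI impI)
          fix a b assume "E' a b"
          then show "a \<in> V' \<and> b \<in> V' \<and> a \<noteq> b \<and> E' b a" unfolding E'_def using Eirr[of a b] Esym[of a b] by blast
        qed
      qed
      moreover have "\<not> has_cycle V' E'" using nc has_cycle_mono[of V' E' V E] unfolding E'_def V'_def by blast
      moreover have "V' \<noteq> {}" using False V'_def by simp
      moreover have "\<forall>a\<in>V'. \<forall>b\<in>V'. f a = 0 \<and> f b = 0 \<longrightarrow> \<not> E' a b" using ind unfolding E'_def V'_def by blast
      moreover have "\<forall>v\<in>V' - D'. sat E' f v"
      proof
        fix v assume v: "v \<in> V' - D'"
        then have "sat E f v" using st unfolding V'_def D'_def by blast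
        moreover have "\<forall>x. E v x \<and> f x \<ge> 2 \<longrightarrow> E' v x"
        proof (intro allI impI)
          fix x assume x: "E v x \<and> f x \<ge> 2"
          then have "x \<in> V" "x \<noteq> u" using Ev2[of v x] Esym[of v x] iso by blast+
          then show "E' v x" using v x unfolding E'_def V'_def D'_def by blast
        qed
        ultimately show "sat E' f v" by (rule sat_mono)
      qed
      moreover have "D' \<subseteq> V'" using DV unfolding D'_def V'_def by blast
      ultimately obtain S where S: "vertex_cover V' E' S" "2 * card S + 1 \<le> sum f V' + card D'"
        using less.hyps by blast
      have "vertex_cover V E S" unfolding vertex_cover_def
      proof (intro conjI allI impI)
        show "S \<subseteq> V" using S(1) unfolding vertex_cover_def V'_def by blast
        fix a b assume e: "E a b"
        then have "a \<in> V'" "b \<in> V'" using Ev1[of a b] Ev2[of a b] Esym[of a b] iso unfolding V'_def by blast+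
        then have "E' a b" using e unfolding E'_def by blast
        then show "a \<in> S \<or> b \<in> S" using S(1) unfolding vertex_cover_def by blast
      qed
      moreover have "sum f V' \<le> sum f V" unfolding V'_def using fin by (simp add: sum_diff1_nat)
      moreover have "card D' \<le> card D" unfolding D'_def using DV fin by (meson Diff_subset card_mono finite_subset)
      ultimately show ?thesis using S(2) by (meson add_le_mono le_trans)
    qed
  next
    case False
    with ucases obtain l p where l: "E u l" "\<forall>y. E l y \<longrightarrow> y = u"
      and pp: "\<forall>x. E u x \<longrightarrow> x = p \<or> (\<forall>y. E x y \<longrightarrow> y = u)" by blast
    define R where "R = {u} \<union> {x. E u x \<and> (\<forall>y. E x y \<longrightarrow> y = u)}"
    define V' where "V' = V - R"
    define E' where "E' = (\<lambda>a b. E a b \<and> a \<in> V' \<and> b \<in> V')"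
    define g where "g = (\<lambda>x. f x + (if x \<in> D then 1 else 0::nat))"
    define s where "s = sum g R"
    define N where "N = {x \<in> V'. E u x}"
    define D' where "D' = D \<inter> V' \<union> (if s \<ge> 3 then N else {})"
    have RV: "R \<subseteq> V" unfolding R_def using uV Ev2 by blast
    have finR: "finite R" using RV fin finite_subset by blast
    have uR: "u \<in> R" unfolding R_def by blast
    have lR: "l \<in> R" unfolding R_def using l by blast
    have ul: "u \<noteq> l" using Eirr[OF l(1)] .
    have F1: "\<forall>v\<in>V'. \<forall>w. E v w \<longrightarrow> w \<in> V' \<or> (w = u \<and> v \<in> N)"
    proof (intro ballI allI impI)
      fix v w assume v: "v \<in> V'" and e: "E v w"
      have wV: "w \<in> V" using Ev2[OF e] .
      have ewv: "E w v" using Esym[OF e] .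
      show "w \<in> V' \<or> (w = u \<and> v \<in> N)"
      proof (cases "w \<in> R")
        case False then show ?thesis using wV unfolding V'_def by blast
      next
        case True
        have vu: "v \<noteq> u" using v uR unfolding V'_def by blast
        show ?thesis
        proof (cases "w = u")
          case True then show ?thesis using v ewv unfolding N_def by blast
        next
          case False
          then have "\<forall>y. E w y \<longrightarrow> y = u" using \<open>w \<in> R\<close> unfolding R_def by blast
          then show ?thesis using ewv vu by blast
        qed
      qed
    qed
    have N1: "N \<subseteq> {p}" unfolding N_def V'_def R_def using pp by blast
    have cardN: "card N \<le> 1" using card_mono[OF _ N1] by simp
    have split: "sum f V + card D = sum f V' + card (D \<inter> V') + s"
    proof -
      have "sum f V = sum f V' + sum f R" unfolding V'_def using sum.subset_diff[OF RV fin, of f] .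
      moreover have "card D = card (D \<inter> V') + card (D \<inter> R)"
      proof -
        have "D = (D \<inter> V') \<union> (D \<inter> R)" "(D \<inter> V') \<inter> (D \<inter> R) = {}" using DV RV unfolding V'_def by blast+
        moreover have "finite D" using DV fin finite_subset by blast
        ultimately show ?thesis using card_Un_disjoint[of "D \<inter> V'" "D \<inter> R"] by simp
      qed
      moreover have "s = sum f R + card (D \<inter> R)" unfolding s_def g_def using sum_g[OF finR] by blast
      ultimately show ?thesis by simp
    qed
    have sub: "\<And>A. A \<subseteq> R \<Longrightarrow> sum g A \<le> s" unfolding s_def using finR by (simp add: sum_mono2)
    have leafR: "\<And>x. x \<in> R \<Longrightarrow> x \<noteq> u \<Longrightarrow> E u x \<and> (\<forall>y. E x y \<longrightarrow> y = u)" unfolding R_def by blast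
        have leaf_g: "\<And>x. x \<in> R \<Longrightarrow> x \<noteq> u \<Longrightarrow> (f u \<noteq> 3 \<longrightarrow> g x \<ge> 1) \<and> (f u = 0 \<longrightarrow> g x \<ge> 2) \<and> (f u = 1 \<longrightarrow> g x \<ge> 1)"
    proof -
      fix x assume x: "x \<in> R" "x \<noteq> u"
      then have ex: "E u x" and lx: "\<forall>y. E x y \<longrightarrow> y = u" using leafR by auto
      have xV: "x \<in> V" using Ev2[OF ex] .
      show "(f u \<noteq> 3 \<longrightarrow> g x \<ge> 1) \<and> (f u = 0 \<longrightarrow> g x \<ge> 2) \<and> (f u = 1 \<longrightarrow> g x \<ge> 1)"
      proof (cases "x \<in> D")
        case True
        have "f u = 0 \<longrightarrow> f x \<noteq> 0" using ind uV xV ex by metis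
        then show ?thesis using True unfolding g_def by auto
      next
        case False
        then have sx: "sat E f x" using st xV by blast
        have "f u = 0 \<longrightarrow> f x \<noteq> 0" using ind uV xV ex by metis
        moreover have "(f x = 0 \<longrightarrow> f u = 3) \<and> (f x = 1 \<longrightarrow> f u \<ge> 2)" using leaf_sat[OF sx lx] .
        ultimately show ?thesis using False unfolding g_def by auto
      qed
    qed
    have gul: "g u + g l \<le> s"
    proof -
      have "{u, l} \<subseteq> R" using uR lR by simp
      then have "sum g {u, l} \<le> s" by (rule sub)
      moreover have "sum g {u, l} = g u + g l" using ul by simp
      ultimately show ?thesis by simp
    qed
    have lu: "l \<noteq> u" using ul by simp
    have lgc: "(f u \<noteq> 3 \<longrightarrow> g l \<ge> 1) \<and> (f u = 0 \<longrightarrow> g l \<ge> 2) \<and> (f u = 1 \<longrightarrow> g l \<ge> 1)"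
      by (rule leaf_g[OF lR lu])
    have gl1: "f u \<noteq> 3 \<Longrightarrow> g l \<ge> 1" using lgc by simp
    have gl2: "f u = 0 \<Longrightarrow> g l \<ge> 2" using lgc by simp
    have gl3: "f u = 1 \<Longrightarrow> g l \<ge> 1" using lgc by simp
    have gge: "\<And>y. g y \<ge> f y" unfolding g_def by simp
    have gD: "\<And>y. y \<in> D \<Longrightarrow> g y = f y + 1" unfolding g_def by simp
    have s2: "s \<ge> 2"
    proof -
      consider "f u = 0" | "f u = 1" | "f u \<ge> 2" by arith
      then show ?thesis
      proof cases
        case 1 then show ?thesis using gul gl2 by linarith
      next
        case 2 then show ?thesis using gul gl3 gge[of u] by linarith
      next
        case 3 then show ?thesis using gul gge[of u] by linarith
      qed
    qed
    have s3: "s \<ge> 3" if "f u \<ge> 2"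
    proof (cases "f u = 3")
      case True then show ?thesis using gul gge[of u] by linarith
    next
      case False then show ?thesis using gul gl1 gge[of u] that by linarith
    qed
    have main_ok: "V' \<noteq> {}" if s_small: "s < 3"
    proof
      assume V'e: "V' = {}"
      have allR: "x \<in> R \<and> x \<noteq> u" if ex: "E u x" for x
        using V'e Ev2[OF ex] Eirr[OF ex] unfolding V'_def by blast
      have fu: "f u \<le> 1" using s3 s_small by linarith
      show False
      proof (cases "u \<in> D")
        case True
        have "g u = f u + 1" using gD[OF True] .
        then show False using gul gl2 gl3 fu s_small by (cases "f u = 0") auto
      next
        case False
        then have su: "sat E f u" using st uV by blast
        show False
        proof (cases "f u = 1")
          case True
          then obtain x where x: "E u x" "f x \<ge> 2" using su unfolding sat_def by auto
          have xu: "x \<in> R" "x \<noteq> u" using allR[OF x(1)] by auto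
          have "sum g {u, x} \<le> s" using sub[of "{u, x}"] xu uR by simp
          then have "g u + g x \<le> s" using xu by simp
          then show False using x gge[of u] gge[of x] True s_small by linarith
        next
          case False
          then have fu0: "f u = 0" using fu by simp
          then have "(\<exists>x. E u x \<and> f x = 3) \<or> (\<exists>x y. x \<noteq> y \<and> E u x \<and> E u y \<and> f x = 2 \<and> f y = 2)"
            using su unfolding sat_def by blast
          then show False
          proof
            assume "\<exists>x. E u x \<and> f x = 3"
            then obtain x where x: "E u x" "f x = 3" by blast
            have xu: "x \<in> R" "x \<noteq> u" using allR[OF x(1)] by auto
            have "sum g {u, x} \<le> s" using sub[of "{u, x}"] xu uR by simp
            then have "g u + g x \<le> s" using xu by simp
            then show False using x gge[of x] s_small by linarith
          next
            assume "\<exists>x y. x \<noteq> y \<and> E u x \<and> E u y \<and> f x = 2 \<and> f y = 2"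
            then obtain x y where xy: "x \<noteq> y" "E u x" "E u y" "f x = 2" "f y = 2" by blast
            have xu: "x \<in> R" "x \<noteq> u" using allR[OF xy(2)] by auto
            have yu: "y \<in> R" "y \<noteq> u" using allR[OF xy(3)] by auto
            have "sum g {u, x, y} \<le> s" using sub[of "{u, x, y}"] xu yu uR by simp
            then have "g u + g x + g y \<le> s" using xu yu xy(1) by simp
            then show False using xy gge[of x] gge[of y] s_small by linarith
          qed
        qed
      qed
    qed
    show ?thesis
    proof (cases "V' = {}")
      case True
      then have s3': "s \<ge> 3" using main_ok by linarith
      have "vertex_cover V E {u}"
        unfolding vertex_cover_def using uV True Ev1 leafR unfolding V'_def by blast
      then show ?thesis using split s3' True by auto
    next
      case False
      have "V' \<subset> V" unfolding V'_def using uV uR by blast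
      then have "card V' < card V" using fin by (simp add: psubset_card_mono)
      moreover have "is_graph V' E'" unfolding is_graph_def
      proof (rule conjI)
        show "finite V'" using fin unfolding V'_def by simp
        show "\<forall>a b. E' a b \<longrightarrow> a \<in> V' \<and> b \<in> V' \<and> a \<noteq> b \<and> E' b a"
        proof (intro allI impI)
          fix a b assume "E' a b"
          then show "a \<in> V' \<and> b \<in> V' \<and> a \<noteq> b \<and> E' b a" unfolding E'_def using Eirr[of a b] Esym[of a b] by blast
        qed
      qed
      moreover have "\<not> has_cycle V' E'" using nc has_cycle_mono[of V' E' V E] unfolding E'_def V'_def by blast
      moreover have "\<forall>a\<in>V'. \<forall>b\<in>V'. f a = 0 \<and> f b = 0 \<longrightarrow> \<not> E' a b" using ind unfolding E'_def V'_def by blast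
      moreover have "\<forall>v\<in>V' - D'. sat E' f v"
      proof
        fix v assume v: "v \<in> V' - D'"
        then have "sat E f v" using st unfolding V'_def D'_def by blast
        moreover have "\<forall>x. E v x \<and> f x \<ge> 2 \<longrightarrow> E' v x"
        proof (intro allI impI)
          fix x assume x: "E v x \<and> f x \<ge> 2"
          have "x \<in> V'"
          proof (rule ccontr)
            assume "x \<notin> V'"
            then have xu: "x = u" "v \<in> N" using F1 v x by blast+
            show False
            proof (cases "s \<ge> 3")
              case True then show False using xu v unfolding D'_def by auto
            next
              case False then show False using s3 x xu by auto
            qed
          qed
          then show "E' v x" using x v unfolding E'_def by blast
        qed
        ultimately show "sat E' f v" by (rule sat_mono)
      qed
      moreover have "D' \<subseteq> V'" unfolding D'_def N_def by auto
      ultimately obtain S where S: "vertex_cover V' E' S" "2 * card S + 1 \<le> sum f V' + card D'"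
        using less.hyps False by blast
      have finS: "finite S" using S(1) fin unfolding vertex_cover_def V'_def by (meson finite_Diff finite_subset)
      have "vertex_cover V E (insert u S)" unfolding vertex_cover_def
      proof (intro conjI allI impI)
        show "insert u S \<subseteq> V" using S(1) uV unfolding vertex_cover_def V'_def by blast
        fix a b assume e: "E a b"
        show "a \<in> insert u S \<or> b \<in> insert u S"
        proof (cases "a \<in> V' \<and> b \<in> V'")
          case True
          then have "E' a b" using e unfolding E'_def by blast
          then show ?thesis using S(1) unfolding vertex_cover_def by blast
        next
          case False
          then have "a \<in> R \<or> b \<in> R" using Ev1[OF e] Ev2[OF e] unfolding V'_def by blast
          then show ?thesis using leafR e Esym[OF e] by blast
        qed
      qed
      moreover have "card (insert u S) \<le> card S + 1" using finS by (simp add: card_insert_if)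
      moreover have "card D' \<le> card (D \<inter> V') + (if s \<ge> 3 then 1 else 0)"
      proof -
        have "card D' \<le> card (D \<inter> V') + card (if s \<ge> 3 then N else {})" unfolding D'_def by (rule card_Un_le)
        then show ?thesis using cardN by (auto split: if_splits)
      qed
      ultimately show ?thesis using S(2) split s2 by (intro exI[of _ "insert u S"]) (auto split: if_splits)
    qed
  qed
qed


lemma part1:
  fixes V :: "'b set"
  assumes t: "is_tree V E"
  shows "gamma_oidR V E \<ge> 2 * beta V E + 1"
proof -
  have g: "is_graph V E" and nc: "\<not> has_cycle V E" and ne: "V \<noteq> {}" using t by (auto simp: is_tree_def)
  have ex: "\<exists>w f. OIDRD V E f \<and> (\<Sum>v\<in>V. f v) = w"
    by (rule exI[of _ "\<Sum>v\<in>V. (3::nat)"], rule exI[of _ "\<lambda>_. 3"]) (simp add: OIDRD_def DRD_def)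
  obtain f where f: "OIDRD V E f" "(\<Sum>v\<in>V. f v) = gamma_oidR V E"
    unfolding gamma_oidR_def using LeastI_ex[OF ex] by blast
  have "\<forall>v\<in>V - {}. sat E f v" using f(1) unfolding OIDRD_def DRD_def sat_def by auto
  moreover have "\<forall>a\<in>V. \<forall>b\<in>V. f a = 0 \<and> f b = 0 \<longrightarrow> \<not> E a b" using f(1) unfolding OIDRD_def by blast
  ultimately obtain S where S: "vertex_cover V E S" "2 * card S + 1 \<le> sum f V + card ({}::'b set)"
    using main[OF g nc ne, of f "{}"] by blast
  have "beta V E \<le> card S" unfolding beta_def using S(1) by (intro Least_le) blast
  then show ?thesis using S(2) f(2) by simp
qed

theorem theorem5:
  shows "(\<forall>(V :: 'a set) E. is_tree V E \<longrightarrow> gamma_oidR V E \<ge> 2 * beta V E + 1) \<and>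
         (\<exists>(V :: nat set) E. is_tree V E \<and> gamma_oidR V E = 2 * beta V E + 1)"
proof
  show "\<forall>(V :: 'a set) E. is_tree V E \<longrightarrow> gamma_oidR V E \<ge> 2 * beta V E + 1" using part1 by blast
next
  define V :: "nat set" where "V = {0, 1}"
  define E :: "nat \<Rightarrow> nat \<Rightarrow> bool" where "E = (\<lambda>a b. a = 0 \<and> b = 1 \<or> a = 1 \<and> b = 0)"
  have g: "is_graph V E" unfolding is_graph_def V_def E_def by simp
  have c: "connected_graph V E" unfolding connected_graph_def V_def
  proof (intro ballI)
    fix a b assume "a \<in> {0::nat, 1}" "b \<in> {0::nat, 1}"
    moreover have "E 0 1" "E 1 0" unfolding E_def by simp_all
    then have "E\<^sup>*\<^sup>* 0 1" "E\<^sup>*\<^sup>* 1 0" by (simp_all add: r_into_rtranclp)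
    ultimately show "E\<^sup>*\<^sup>* a b" by (metis empty_iff insert_iff rtranclp.rtrancl_refl)
  qed
  have nc: "\<not> has_cycle V E"
  proof
    assume "has_cycle V E"
    then obtain cs where cs: "length cs \<ge> 3" "distinct cs" "set cs \<subseteq> V" unfolding has_cycle_def by blast
    have "length cs = card (set cs)" using cs(2) by (simp add: distinct_card)
    also have "\<dots> \<le> card V" using cs(3) unfolding V_def by (intro card_mono) auto
    also have "\<dots> = 2" unfolding V_def by simp
    finally show False using cs(1) by simp
  qed
  have t: "is_tree V E" unfolding is_tree_def using g c nc by (simp add: V_def)
  have b: "beta V E = 1" unfolding beta_def
  proof (rule Least_equality)
    show "\<exists>S. vertex_cover V E S \<and> card S = 1"
      by (rule exI[of _ "{0}"]) (auto simp: vertex_cover_def V_def E_def)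
  next
    fix k assume "\<exists>S. vertex_cover V E S \<and> card S = k"
    then obtain S where S: "vertex_cover V E S" "card S = k" by blast
    have fS: "finite S" using S(1) unfolding vertex_cover_def V_def by (meson finite.emptyI finite_insert finite_subset)
    have "E 0 1" unfolding E_def by simp
    then have "0 \<in> S \<or> 1 \<in> S" using S(1) unfolding vertex_cover_def by blast
    then have "S \<noteq> {}" by blast
    then have "card S > 0" using fS card_gt_0_iff by blast
    then show "1 \<le> k" using S(2) by simp
  qed
  have "gamma_oidR V E \<le> 3" unfolding gamma_oidR_def
  proof (rule Least_le)
    let ?f = "\<lambda>x::nat. if x = 0 then 0 else (3::nat)"
    have "OIDRD V E ?f" unfolding OIDRD_def DRD_def V_def by (simp add: E_def)
    moreover have "(\<Sum>v\<in>V. ?f v) = 3" unfolding V_def by simp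
    ultimately show "\<exists>f. OIDRD V E f \<and> (\<Sum>v\<in>V. f v) = 3" by blast
  qed
  moreover have "gamma_oidR V E \<ge> 2 * beta V E + 1" by (rule part1[OF t])
  ultimately show "\<exists>(V :: nat set) E. is_tree V E \<and> gamma_oidR V E = 2 * beta V E + 1"
    using t b by (intro exI[of _ V] exI[of _ E]) simp
qed

end
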